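(* On the domain $\{(p,q,r): p<q,\ r>1\}$, $\Theta(p,q,r)$ is monotone increasing in $p$ (for fixed $q$ and $r$) and monotone decreasing in $q$ (for fixed $p$ and $r$).
   Context: For $p<q$ and $r>1$ define $$\Theta(p,q,r)=\int_1^r\frac{dx}{\sqrt{\left(\frac{r^p-r^q}{r^p-1}+\frac{r^q-1}{r^p-1}x^p\right)^{2/q}-x^2}}\quad (p\ne0,\ q\ne0),$$ $$\Theta(0,q,r)=\int_1^r\frac{dx}{\sqrt{\left(1+\frac{r^q-1}{\log r}\log x\right)^{2/q}-x^2}},\qquad \Theta(p,0,r)=\int_1^r\frac{dx}{\sqrt{r^{\frac{2(x^p-1)}{r^p-1}}-x^2}}.$$ *)

theory Defs
  imports "HOL-Analysis.Analysis"
begin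

text \<open>The integrand of Theta(p,q,r). The square root is singular at both
endpoints x = 1 and x = r, so the integral is an improper integral; we use the
Lebesgue interval integral over (1, r).\<close>

definition Theta_integrand :: "real \<Rightarrow> real \<Rightarrow> real \<Rightarrow> real \<Rightarrow> real" where
  "Theta_integrand p q r x =
     (if p = 0 then
        1 / sqrt ((1 + (r powr q - 1) / ln r * ln x) powr (2 / q) - x\<^sup>2)
      else if q = 0 then
        1 / sqrt (r powr (2 * (x powr p - 1) / (r powr p - 1)) - x\<^sup>2)
      else
        1 / sqrt (((r powr p - r powr q) / (r powr p - 1)
                   + (r powr q - 1) / (r powr p - 1) * x powr p) powr (2 / q) - x\<^sup>2))"

definition Theta :: "real \<Rightarrow> real \<Rightarrow> real \<Rightarrow> real" where
  "Theta p q r = (LBINT x=1..r. Theta_integrand p q r x)"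

end

theory Submission
  imports Defs
begin


definition kap :: "real \<Rightarrow> real \<Rightarrow> real" where
  "kap s r = (if s = 0 then 1 / ln r else s / (r powr s - 1))"
definition FF :: "real \<Rightarrow> real \<Rightarrow> real \<Rightarrow> real" where
  "FF s r y = (if s = 0 then ln y / ln r else (y powr s - 1) / (r powr s - 1))"
definition GI :: "real \<Rightarrow> real \<Rightarrow> real \<Rightarrow> real" where
  "GI s r w = (if s = 0 then r powr w else (1 + (r powr s - 1) * w) powr (1 / s))"

lemma rps_pos: assumes "1 < (r::real)" "s > 0" shows "r powr s > 1"
  using powr_less_mono[of 0 s r] assms by simp
lemma rps_neg: assumes "1 < (r::real)" "s < 0" shows "r powr s < 1"
  using powr_less_mono[of s 0 r] assms by simp

lemma kap_pos: assumes "1 < (r::real)" shows "kap s r > 0"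
proof (cases "s = 0")
  case True then show ?thesis using assms by (simp add: kap_def)
next
  case False
  then consider "s > 0" | "s < 0" by linarith
  then show ?thesis
  proof cases
    case 1 then show ?thesis using rps_pos[OF assms 1] by (simp add: kap_def)
  next
    case 2 then show ?thesis using rps_neg[OF assms 2] by (simp add: kap_def divide_neg_neg)
  qed
qed

lemma rps_ne: assumes "1 < (r::real)" "s \<noteq> 0" shows "r powr s - 1 \<noteq> 0"
proof (cases "s > 0")
  case True then show ?thesis using rps_pos[OF assms(1) True] by simp
next
  case False then have "s < 0" using assms(2) by simp
  then show ?thesis using rps_neg[OF assms(1)] by fastforce
qed

lemma FF_deriv: assumes "1 < (r::real)" "0 < y"
  shows "(FF s r has_real_derivative kap s r * y powr (s - 1)) (at y)"
proof (cases "s = 0")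
  case True
  have "((\<lambda>y. ln y / ln r) has_real_derivative (1 / y) / ln r) (at y)"
    using assms by (auto intro!: derivative_eq_intros)
  moreover have "(1 / y) / ln r = kap s r * y powr (s - 1)"
    using True assms by (simp add: kap_def powr_neg_one)
  ultimately show ?thesis using True by (simp add: FF_def[abs_def])
next
  case False
  have "((\<lambda>y. (y powr s - 1) / (r powr s - 1)) has_real_derivative (s * y powr (s - 1)) / (r powr s - 1)) (at y)"
    using assms False by (auto intro!: derivative_eq_intros)
  moreover have "(s * y powr (s - 1)) / (r powr s - 1) = kap s r * y powr (s - 1)"
    using False by (simp add: kap_def)
  ultimately show ?thesis using False by (simp add: FF_def[abs_def])
qed

lemma FF_1[simp]: "FF s r 1 = 0" by (simp add: FF_def)
lemma FF_r: "1 < r \<Longrightarrow> FF s r r = 1" using rps_ne[of r s] by (simp add: FF_def)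

lemma FF_strict_mono: assumes "1 < (r::real)" "0 < y1" "y1 < y2" shows "FF s r y1 < FF s r y2"
proof -
  obtain z where z: "y1 < z" "z < y2" "FF s r y2 - FF s r y1 = (y2 - y1) * (kap s r * z powr (s - 1))"
    using MVT2[OF assms(3), of "FF s r" "\<lambda>z. kap s r * z powr (s - 1)"] FF_deriv[OF assms(1)] assms by force
  have "kap s r * z powr (s - 1) > 0" using kap_pos[OF assms(1), of s] z assms by simp
  then have "(y2 - y1) * (kap s r * z powr (s - 1)) > 0" using assms kap_pos[OF assms(1), of s] by (intro mult_pos_pos) auto
  then show ?thesis using z by linarith
qed

lemma FF_le_iff: assumes "1 < (r::real)" "0 < y1" "0 < y2" shows "FF s r y1 \<le> FF s r y2 \<longleftrightarrow> y1 \<le> y2"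
proof
  assume "FF s r y1 \<le> FF s r y2"
  then show "y1 \<le> y2" using FF_strict_mono[OF assms(1), of y2 y1 s] assms by (meson not_le)
next
  assume "y1 \<le> y2"
  then show "FF s r y1 \<le> FF s r y2" using FF_strict_mono[OF assms(1), of y1 y2 s] assms
    by (cases "y1 = y2") auto
qed

lemma FF_range: assumes "1 < (r::real)" "1 \<le> y" "y \<le> r" shows "0 \<le> FF s r y" "FF s r y \<le> 1"
proof -
  show "0 \<le> FF s r y" using FF_le_iff[OF assms(1), of 1 y s] assms by auto
  show "FF s r y \<le> 1" using FF_le_iff[OF assms(1), of y r s] FF_r[OF assms(1), of s] assms by auto
qed

lemma GI_props: assumes "1 < (r::real)" "0 \<le> w" "w \<le> 1"
  shows "GI s r w > 0" "FF s r (GI s r w) = w"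
proof -
  have "GI s r w > 0 \<and> FF s r (GI s r w) = w"
  proof (cases "s = 0")
    case True then show ?thesis using assms by (simp add: GI_def FF_def ln_powr)
  next
    case False
    have b: "1 + (r powr s - 1) * w > 0"
    proof (cases "s > 0")
      case True then show ?thesis using rps_pos[OF assms(1) True] assms by (smt (verit) mult_nonneg_nonneg)
    next
      case F: False
      then have "s < 0" using False by simp
      have "(r powr s - 1) * w \<ge> (r powr s - 1) * 1"
        using rps_neg[OF assms(1) \<open>s<0\<close>] assms by (intro mult_left_mono_neg) auto
      moreover have "r powr s > 0" using assms by simp
      ultimately show ?thesis by (simp only: mult_1_right)
    qed
    have "GI s r w powr s = 1 + (r powr s - 1) * w"
      using False b by (simp add: GI_def powr_powr)
    then show ?thesis using False rps_ne[OF assms(1) False] b by (simp add: FF_def GI_def)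
  qed
  then show "GI s r w > 0" "FF s r (GI s r w) = w" by auto
qed



lemma K_nonneg:
  fixes K psi phi :: "real \<Rightarrow> real"
  assumes "a \<le> y" "y \<le> b" "K a = 0" "K b = 0"
   and D: "\<And>z. a \<le> z \<Longrightarrow> z \<le> b \<Longrightarrow> (K has_real_derivative psi z * phi z) (at z)"
   and P: "\<And>z. a \<le> z \<Longrightarrow> z \<le> b \<Longrightarrow> psi z > 0"
   and M: "\<And>z1 z2. a \<le> z1 \<Longrightarrow> z1 \<le> z2 \<Longrightarrow> z2 \<le> b \<Longrightarrow> phi z2 \<le> phi z1"
  shows "K y \<ge> 0"
proof (cases "phi y \<ge> 0")
  case True
  have "K a \<le> K y"
  proof (rule DERIV_nonneg_imp_nondecreasing[OF assms(1)])
    fix x assume x: "a \<le> x" "x \<le> y"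
    have "phi y \<le> phi x" using M[of x y] x assms(2) by auto
    then have "phi x \<ge> 0" using True by linarith
    moreover have "psi x > 0" using P[of x] x assms(2) by auto
    ultimately have "psi x * phi x \<ge> 0" by simp
    moreover have "DERIV K x :> psi x * phi x" using D[of x] x assms(2) by auto
    ultimately show "\<exists>d. DERIV K x :> d \<and> d \<ge> 0" by blast
  qed
  then show ?thesis using assms by simp
next
  case False
  have "K y \<ge> K b"
  proof (rule DERIV_nonpos_imp_nonincreasing[OF assms(2)])
    fix x assume x: "y \<le> x" "x \<le> b"
    have "phi x \<le> phi y" using M[of y x] x assms(1) by auto
    then have "phi x \<le> 0" using False by linarith
    moreover have "psi x > 0" using P[of x] x assms(1) by auto
    ultimately have "psi x * phi x \<le> 0" by (simp add: mult_nonneg_nonpos)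
    moreover have "DERIV K x :> psi x * phi x" using D[of x] x assms(1) by auto
    ultimately show "\<exists>d. DERIV K x :> d \<and> d \<le> 0" by blast
  qed
  then show ?thesis using assms by simp
qed

definition cc :: "real \<Rightarrow> real \<Rightarrow> real \<Rightarrow> real" where
  "cc s1 s2 r = kap s1 r * (s2 - s1) * min 1 (r powr (s1 - 2 * s2)) / (2 * kap s2 r ^ 2)"

lemma cc_pos: assumes "1 < (r::real)" "s1 < s2" shows "cc s1 s2 r > 0"
  using kap_pos[OF assms(1), of s1] kap_pos[OF assms(1), of s2] assms by (simp add: cc_def)

lemma core:
  assumes r: "1 < (r::real)" and s: "s1 < s2" and y: "1 \<le> y" "y \<le> r"
  shows "FF s1 r y - FF s2 r y \<ge> cc s1 s2 r * (FF s2 r y * (1 - FF s2 r y))"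
proof -
  define c where "c = cc s1 s2 r"
  define k1 where "k1 = kap s1 r"
  define k2 where "k2 = kap s2 r"
  have k1: "k1 > 0" and k2: "k2 > 0" using kap_pos[OF r] by (auto simp: k1_def k2_def)
  define K where "K z = FF s1 r z - FF s2 r z - c * (FF s2 r z * (1 - FF s2 r z))" for z
  define psi where "psi z = k2 * z powr (s2 - 1)" for z
  define phi where "phi z = (k1 / k2) * z powr (s1 - s2) - 1 - c * (1 - 2 * FF s2 r z)" for z
  have "K y \<ge> 0"
  proof (rule K_nonneg[OF y, of K psi phi])
    show "K 1 = 0" by (simp add: K_def)
    show "K r = 0" using r by (simp add: K_def FF_r)
    show "psi z > 0" if "1 \<le> z" "z \<le> r" for z using that k2 by (simp add: psi_def)
  next
    fix z assume z: "1 \<le> z" "z \<le> r"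
    have d: "(K has_real_derivative
       k1 * z powr (s1 - 1) - k2 * z powr (s2 - 1)
         - c * (k2 * z powr (s2 - 1) * (1 - FF s2 r z) + (0 - k2 * z powr (s2 - 1)) * FF s2 r z)) (at z)"
      unfolding K_def[abs_def] k1_def k2_def using z r
      by (intro DERIV_diff DERIV_cmult DERIV_mult FF_deriv DERIV_const) auto
    have e: "z powr (s1 - 1) = z powr (s2 - 1) * z powr (s1 - s2)"
      using z by (simp add: powr_add[symmetric])
    have eq: "k1 * z powr (s1 - 1) - k2 * z powr (s2 - 1)
         - c * (k2 * z powr (s2 - 1) * (1 - FF s2 r z) + (0 - k2 * z powr (s2 - 1)) * FF s2 r z)
         = psi z * phi z"
      unfolding psi_def phi_def e using k2 by (simp add: field_simps)
    show "(K has_real_derivative psi z * phi z) (at z)" by (rule DERIV_cong[OF d eq])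
  next
    fix z1 z2 assume zz: "1 \<le> z1" "z1 \<le> z2" "z2 \<le> r"
    show "phi z2 \<le> phi z1"
    proof (rule DERIV_nonpos_imp_nonincreasing[OF zz(2)])
      fix x assume x: "z1 \<le> x" "x \<le> z2"
      have x0: "x > 0" "x \<ge> 1" "x \<le> r" using x zz by auto
      have d: "(phi has_real_derivative
         (k1 / k2) * ((s1 - s2) * x powr (s1 - s2 - 1)) - 0 - c * (0 - 2 * (k2 * x powr (s2 - 1)))) (at x)"
        unfolding phi_def[abs_def] k2_def using x0 r
        by (intro DERIV_diff DERIV_cmult DERIV_mult FF_deriv DERIV_const has_real_derivative_powr) auto
      have m: "min 1 (r powr (s1 - 2 * s2)) \<le> x powr (s1 - 2 * s2)"
      proof (cases "s1 - 2 * s2 \<ge> 0")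
        case True then show ?thesis using x0 by (simp add: ge_one_powr_ge_zero)
      next
        case False
        then have "r powr (s1 - 2 * s2) \<le> x powr (s1 - 2 * s2)" using x0
          by (intro powr_mono2') auto
        then show ?thesis by simp
      qed
      have "2 * c * k2 * x powr (s2 - 1) \<le> (k1 / k2) * (s2 - s1) * x powr (s1 - s2 - 1)"
      proof -
        have "2 * c * k2 = (k1 / k2) * (s2 - s1) * min 1 (r powr (s1 - 2 * s2))"
          unfolding c_def cc_def k1_def[symmetric] k2_def[symmetric] using k2 by (simp add: power2_eq_square)
        moreover have "x powr (s1 - s2 - 1) = x powr (s1 - 2 * s2) * x powr (s2 - 1)"
          using x0 by (simp add: powr_add[symmetric] algebra_simps)
        moreover have "min 1 (r powr (s1 - 2 * s2)) * x powr (s2 - 1) \<le> x powr (s1 - 2 * s2) * x powr (s2 - 1)"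
          using m x0 by (intro mult_right_mono) auto
        ultimately show ?thesis using k1 k2 s
          by (smt (verit) mult.assoc mult_left_mono divide_pos_pos)
      qed
      then have "(k1 / k2) * ((s1 - s2) * x powr (s1 - s2 - 1)) - 0 - c * (0 - 2 * (k2 * x powr (s2 - 1))) \<le> 0"
        by (simp add: algebra_simps diff_divide_distrib)
      with d show "\<exists>d. DERIV phi x :> d \<and> d \<le> 0" by blast
    qed
  qed
  then show ?thesis by (simp add: K_def c_def)
qed



lemma FF_cont: assumes "1 < (r::real)" shows "continuous_on {1..r} (FF s r)"
proof (rule continuous_at_imp_continuous_on, intro ballI)
  fix x assume "x \<in> {1..r}"
  then have "x > 0" by auto
  then show "isCont (FF s r) x" using FF_deriv[OF assms, of x s] DERIV_isCont by blast
qed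

lemma FF_strict_range: assumes "1 < (r::real)" "1 < x" "x < r"
  shows "0 < FF s r x" "FF s r x < 1"
  using FF_strict_mono[OF assms(1), of 1 x s] FF_strict_mono[OF assms(1), of x r s] FF_r[OF assms(1)] assms
  by auto

definition hdom :: "real \<Rightarrow> real \<Rightarrow> real \<Rightarrow> real" where
  "hdom q r x = kap q r * x powr (q - 1) / sqrt (FF q r x * (1 - FF q r x))"

lemma hdom_integrable: assumes r: "1 < (r::real)"
  shows "set_integrable lborel (einterval (ereal 1) (ereal r)) (hdom q r)"
proof (rule interval_integral_FTC_nonneg(1)[where F = "\<lambda>x. arcsin (2 * FF q r x - 1)"])
  show "ereal 1 < ereal r" using r by simp
next
  fix x assume x: "ereal 1 < ereal x" "ereal x < ereal r"
  then have x': "1 < x" "x < r" by auto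
  define w where "w = FF q r x"
  have w: "0 < w" "w < 1" using FF_strict_range[OF r x'] by (auto simp: w_def)
  have d: "DERIV (\<lambda>x. arcsin (2 * FF q r x - 1)) x :> inverse (sqrt (1 - (2 * FF q r x - 1)\<^sup>2)) * (2 * (kap q r * x powr (q - 1)) - 0)"
  proof (rule DERIV_chain2[OF DERIV_arcsin])
    show "DERIV (\<lambda>x. 2 * FF q r x - 1) x :> 2 * (kap q r * x powr (q - 1)) - 0"
      using r x' by (intro DERIV_diff DERIV_cmult FF_deriv DERIV_const) auto
  qed (use w in \<open>auto simp: w_def\<close>)
  have "1 - (2 * w - 1)\<^sup>2 = 4 * (w * (1 - w))" by (simp add: power2_eq_square algebra_simps)
  then have "sqrt (1 - (2 * w - 1)\<^sup>2) = 2 * sqrt (w * (1 - w))" by (simp add: real_sqrt_mult)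
  then have "inverse (sqrt (1 - (2 * FF q r x - 1)\<^sup>2)) * (2 * (kap q r * x powr (q - 1)) - 0) = hdom q r x"
    using w by (simp add: hdom_def w_def[symmetric] field_simps)
  with d show "DERIV (\<lambda>x. arcsin (2 * FF q r x - 1)) x :> hdom q r x" by simp
  have "isCont (FF q r) x" using FF_deriv[OF r, of x q] x' DERIV_isCont by auto
  moreover have "isCont (\<lambda>x. x powr (q - 1)) x" using x' by (auto intro!: continuous_intros)
  moreover have "w * (1 - w) > 0" using w by simp
  ultimately show "isCont (hdom q r) x"
    unfolding hdom_def[abs_def] using w by (auto simp: w_def intro!: continuous_intros)
next
  show "AE x in lborel. ereal 1 < ereal x \<longrightarrow> ereal x < ereal r \<longrightarrow> 0 \<le> hdom q r x"
  proof (rule AE_I2, intro impI)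
    fix x assume x: "ereal 1 < ereal x" "ereal x < ereal r"
    then have x': "1 < x" "x < r" by auto
    show "0 \<le> hdom q r x" using FF_strict_range[OF r x', of q] kap_pos[OF r, of q] x'
      by (simp add: hdom_def)
  qed
next
  have c: "continuous_on {1..r} (\<lambda>x. arcsin (2 * FF q r x - 1))"
    using FF_range[OF r] by (intro continuous_intros FF_cont[OF r]) auto
  show "(((\<lambda>x. arcsin (2 * FF q r x - 1)) \<circ> real_of_ereal) \<longlongrightarrow> arcsin (2 * FF q r 1 - 1)) (at_right (ereal 1))"
    unfolding ereal_tendsto_simps1 using continuous_on_Icc_at_rightD[OF c] r by simp
  show "(((\<lambda>x. arcsin (2 * FF q r x - 1)) \<circ> real_of_ereal) \<longlongrightarrow> arcsin (2 * FF q r r - 1)) (at_left (ereal r))"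
    unfolding ereal_tendsto_simps1 using continuous_on_Icc_at_leftD[OF c] r by simp
qed

lemma Theta_integrand_meas: "Theta_integrand p q r \<in> borel_measurable borel"
  unfolding Theta_integrand_def[abs_def] by measurable

definition gg :: "real \<Rightarrow> real \<Rightarrow> real \<Rightarrow> real \<Rightarrow> real" where
  "gg p q r x = GI q r (FF p r x)"

lemma gg_props: assumes r: "1 < (r::real)" and pq: "p < q" and x: "1 \<le> x" "x \<le> r"
  shows "FF q r (gg p q r x) = FF p r x" "x \<le> gg p q r x" "gg p q r x \<le> r"
proof -
  have w: "0 \<le> FF p r x" "FF p r x \<le> 1" using FF_range[OF r x] by auto
  show e: "FF q r (gg p q r x) = FF p r x" using GI_props[OF r w] by (simp add: gg_def)
  have gp: "gg p q r x > 0" using GI_props[OF r w] by (simp add: gg_def)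
  have "FF q r x \<le> FF p r x"
    using core[OF r pq x] cc_pos[OF r pq] FF_range[OF r x, of q]
    by (smt (verit) mult_nonneg_nonneg)
  then show "x \<le> gg p q r x" using FF_le_iff[OF r, of x "gg p q r x" q] e gp x by simp
  show "gg p q r x \<le> r" using FF_le_iff[OF r, of "gg p q r x" r q] e gp w FF_r[OF r] r by simp
qed

lemma alg_aux: "(A::real) - 1 \<noteq> 0 \<Longrightarrow> 1 + (B - 1) * ((X - 1) / (A - 1)) = (A - B) / (A - 1) + (B - 1) / (A - 1) * X"
proof -
  assume h: "A - 1 \<noteq> 0"
  have 1: "(A - B) / (A - 1) + (B - 1) / (A - 1) * X = ((A - B) + (B - 1) * X) / (A - 1)"
    by (simp add: add_divide_distrib)
  have 2: "1 + (B - 1) * ((X - 1) / (A - 1)) = ((A - 1) + (B - 1) * (X - 1)) / (A - 1)"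
    using h by (simp add: add_divide_distrib)
  have 3: "(A - 1) + (B - 1) * (X - 1) = (A - B) + (B - 1) * X" by (simp add: algebra_simps)
  show ?thesis unfolding 1 2 3 ..
qed

lemma integrand_eq: assumes r: "1 < (r::real)" and pq: "p < q" and x: "1 \<le> x" "x \<le> r"
  shows "Theta_integrand p q r x = 1 / sqrt ((gg p q r x)\<^sup>2 - x\<^sup>2)"
proof -
  have w: "0 \<le> FF p r x" "FF p r x \<le> 1" using FF_range[OF r x] by auto
  have x0: "x > 0" using x by simp
  show ?thesis
  proof (cases "q = 0")
    case True
    then have p: "p \<noteq> 0" using pq by simp
    have "(r powr FF p r x)\<^sup>2 = r powr (2 * (x powr p - 1) / (r powr p - 1))"
      using p r by (simp add: FF_def power2_eq_square powr_add[symmetric])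
    then show ?thesis using True p by (simp add: Theta_integrand_def gg_def GI_def)
  next
    case False
    define b where "b = 1 + (r powr q - 1) * FF p r x"
    have be: "b = (1 - FF p r x) + FF p r x * r powr q" by (simp add: algebra_simps b_def)
    have rq: "r powr q > 0" using r by simp
    have b: "b > 0"
    proof (cases "FF p r x = 1")
      case True then show ?thesis using be rq by simp
    next
      case False then show ?thesis using be rq w by (smt (verit) mult_nonneg_nonneg)
    qed
    have sq: "(b powr (1 / q))\<^sup>2 = b powr (2 / q)"
      using b by (simp add: power2_eq_square powr_add[symmetric])
    have g: "gg p q r x = b powr (1 / q)" using False by (simp add: gg_def GI_def b_def)
    have "Theta_integrand p q r x = 1 / sqrt (b powr (2 / q) - x\<^sup>2)"
    proof (cases "p = 0")
      case True
      have "b = 1 + (r powr q - 1) / ln r * ln x" using True by (simp add: b_def FF_def)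
      then show ?thesis using True False by (simp add: Theta_integrand_def)
    next
      case p: False
      have "b = (r powr p - r powr q) / (r powr p - 1) + (r powr q - 1) / (r powr p - 1) * x powr p"
        using p alg_aux[OF rps_ne[OF r p]] by (simp add: b_def FF_def)
      then show ?thesis using p False by (simp add: Theta_integrand_def)
    qed
    then show ?thesis using g sq by simp
  qed
qed

lemma gg_lower: assumes r: "1 < (r::real)" and pq: "p < q" and x: "1 \<le> x" "x \<le> r"
  shows "(gg p q r x)\<^sup>2 - x\<^sup>2 \<ge> (2 * cc p q r / (kap q r * max 1 (r powr (q - 1)))) * (FF q r x * (1 - FF q r x))"
proof -
  define g where "g = gg p q r x"
  define Mq where "Mq = kap q r * max 1 (r powr (q - 1))"
  define c where "c = cc p q r"
  have Mq: "Mq > 0" using kap_pos[OF r, of q] by (simp add: Mq_def)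
  have c: "c > 0" using cc_pos[OF r pq] by (simp add: c_def)
  have gx: "x \<le> g" "g \<le> r" and e: "FF q r g = FF p r x" using gg_props[OF r pq x] by (auto simp: g_def)
  have m: "FF q r g - FF q r x \<le> Mq * (g - x)"
  proof (cases "x = g")
    case True then show ?thesis by simp
  next
    case False
    then have "x < g" using gx by simp
    then obtain z where z: "x < z" "z < g" "FF q r g - FF q r x = (g - x) * (kap q r * z powr (q - 1))"
      using MVT2[of x g "FF q r" "\<lambda>z. kap q r * z powr (q - 1)"] FF_deriv[OF r] x by force
    have "z powr (q - 1) \<le> max 1 (r powr (q - 1))"
    proof (cases "q - 1 \<ge> 0")
      case True
      then have "z powr (q - 1) \<le> r powr (q - 1)" using z x gx by (intro powr_mono2) auto
      then show ?thesis by simp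
    next
      case False
      then have "z powr (q - 1) \<le> z powr 0" using z x by (intro powr_mono) auto
      then show ?thesis using z x by simp
    qed
    then have "kap q r * z powr (q - 1) \<le> Mq" using kap_pos[OF r, of q] by (simp add: Mq_def)
    then show ?thesis using z \<open>x < g\<close> by (simp add: mult_left_mono mult.commute)
  qed
  have "FF p r x - FF q r x \<ge> c * (FF q r x * (1 - FF q r x))" using core[OF r pq x] by (simp add: c_def)
  then have "Mq * (g - x) \<ge> c * (FF q r x * (1 - FF q r x))" using m e by simp
  then have 1: "g - x \<ge> (c / Mq) * (FF q r x * (1 - FF q r x))" using Mq by (simp add: field_simps)
  have "g\<^sup>2 - x\<^sup>2 = (g - x) * (g + x)" by (simp add: power2_eq_square algebra_simps)
  also have "\<dots> \<ge> (g - x) * 2" using gx x by (intro mult_left_mono) auto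
  finally have "g\<^sup>2 - x\<^sup>2 \<ge> 2 * (g - x)" by simp
  with 1 show ?thesis by (simp add: g_def Mq_def c_def)
qed

lemma integrand_dom: assumes r: "1 < (r::real)" and pq: "p < q" and x: "1 < x" "x < r"
  defines "B \<equiv> 2 * cc p q r / (kap q r * max 1 (r powr (q - 1)))"
  defines "A \<equiv> 1 / (sqrt B * (kap q r * min 1 (r powr (q - 1))))"
  shows "0 < Theta_integrand p q r x" "Theta_integrand p q r x \<le> A * hdom q r x"
    "0 < (gg p q r x)\<^sup>2 - x\<^sup>2"
proof -
  have x': "1 \<le> x" "x \<le> r" using x by auto
  define t where "t = FF q r x * (1 - FF q r x)"
  have t: "t > 0" using FF_strict_range[OF r x, of q] by (simp add: t_def)
  have B: "B > 0" using cc_pos[OF r pq] kap_pos[OF r, of q] by (simp add: B_def)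
  define D where "D = (gg p q r x)\<^sup>2 - x\<^sup>2"
  have D: "D \<ge> B * t" using gg_lower[OF r pq x'] by (simp add: D_def B_def t_def)
  have Bt: "B * t > 0" using B t by simp
  then show "0 < (gg p q r x)\<^sup>2 - x\<^sup>2" using D by (simp add: D_def)
  have ie: "Theta_integrand p q r x = 1 / sqrt D" using integrand_eq[OF r pq x'] by (simp add: D_def)
  then show "0 < Theta_integrand p q r x" using Bt D by simp
  have "1 / sqrt D \<le> 1 / sqrt (B * t)" using Bt D by (intro divide_left_mono) auto
  also have "\<dots> = (1 / sqrt B) * (1 / sqrt t)" by (simp add: real_sqrt_mult)
  also have "\<dots> \<le> A * hdom q r x"
  proof -
    define mu where "mu = kap q r * min 1 (r powr (q - 1))"
    have "r powr (q - 1) > 0" using r by simp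
    then have mu: "mu > 0" using kap_pos[OF r, of q] by (simp add: mu_def min_def)
    have "x powr (q - 1) \<ge> min 1 (r powr (q - 1))"
    proof (cases "q - 1 \<ge> 0")
      case True
      then have "x powr (q - 1) \<ge> x powr 0" using x by (intro powr_mono) auto
      then show ?thesis using x by simp
    next
      case False
      then have "x powr (q - 1) \<ge> r powr (q - 1)" using x by (intro powr_mono2') auto
      then show ?thesis by simp
    qed
    then have "kap q r * x powr (q - 1) \<ge> mu" using kap_pos[OF r, of q] by (simp add: mu_def)
    then have "1 / sqrt t \<le> (1 / mu) * hdom q r x"
      using mu t by (simp add: hdom_def t_def[symmetric] field_simps)
    then have "(1 / sqrt B) * (1 / sqrt t) \<le> (1 / sqrt B) * ((1 / mu) * hdom q r x)"
      using B by (intro mult_left_mono) auto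
    then show ?thesis by (simp add: A_def mu_def)
  qed
  finally show "Theta_integrand p q r x \<le> A * hdom q r x" using ie by simp
qed

lemma Theta_integrable: assumes r: "1 < (r::real)" and pq: "p < q"
  shows "set_integrable lborel (einterval (ereal 1) (ereal r)) (Theta_integrand p q r)"
proof -
  define B where "B = 2 * cc p q r / (kap q r * max 1 (r powr (q - 1)))"
  define A where "A = 1 / (sqrt B * (kap q r * min 1 (r powr (q - 1))))"
  show ?thesis
  proof (rule set_integrable_bound)
    show "set_integrable lborel (einterval (ereal 1) (ereal r)) (\<lambda>x. A * hdom q r x)"
      using hdom_integrable[OF r] by auto
    show "set_borel_measurable lborel (einterval (ereal 1) (ereal r)) (Theta_integrand p q r)"
      unfolding set_borel_measurable_def Theta_integrand_def[abs_def] by measurable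
    show "AE x in lborel. x \<in> einterval (ereal 1) (ereal r) \<longrightarrow> norm (Theta_integrand p q r x) \<le> norm (A * hdom q r x)"
    proof (rule AE_I2, intro impI)
      fix x assume "x \<in> einterval (ereal 1) (ereal r)"
      then have x: "1 < x" "x < r" by auto
      have a: "0 < Theta_integrand p q r x" and b: "Theta_integrand p q r x \<le> A * hdom q r x"
        using integrand_dom[OF r pq x] unfolding A_def B_def by simp_all
      show "norm (Theta_integrand p q r x) \<le> norm (A * hdom q r x)"
        using a b abs_ge_self[of "A * hdom q r x"] by (simp del: abs_mult)
    qed
  qed
qed

lemma FF_anti: assumes r: "1 < (r::real)" and s: "s1 \<le> s2" and y: "1 \<le> y" "y \<le> r"
  shows "FF s2 r y \<le> FF s1 r y"
proof (cases "s1 = s2")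
  case False
  then have s': "s1 < s2" using s by simp
  show ?thesis using core[OF r s' y] cc_pos[OF r s'] FF_range[OF r y, of s2]
    by (smt (verit) mult_nonneg_nonneg)
qed simp

lemma Theta_eq: assumes "1 < (r::real)"
  shows "Theta p q r = (LINT x:einterval (ereal 1) (ereal r)|lborel. Theta_integrand p q r x)"
  using assms unfolding Theta_def interval_lebesgue_integral_def by (simp add: one_ereal_def)

lemma inv_sqrt_mono: "0 < (u::real) \<Longrightarrow> u \<le> v \<Longrightarrow> 1 / sqrt v \<le> 1 / sqrt u"
  by (intro divide_left_mono) auto

lemma mono_p: assumes r: "1 < (r::real)" and p: "p1 \<le> p2" "p2 < q"
  shows "Theta p1 q r \<le> Theta p2 q r"
proof -
  have pq1: "p1 < q" using p by simp
  show ?thesis unfolding Theta_eq[OF r]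
  proof (rule set_integral_mono[OF Theta_integrable[OF r pq1] Theta_integrable[OF r p(2)]])
    fix x assume "x \<in> einterval (ereal 1) (ereal r)"
    then have x: "1 < x" "x < r" by auto
    then have x': "1 \<le> x" "x \<le> r" by auto
    have g1: "x \<le> gg p1 q r x" "FF q r (gg p1 q r x) = FF p1 r x" using gg_props[OF r pq1 x'] by auto
    have g2: "x \<le> gg p2 q r x" "FF q r (gg p2 q r x) = FF p2 r x" using gg_props[OF r p(2) x'] by auto
    have "FF p2 r x \<le> FF p1 r x" using FF_anti[OF r p(1) x'] .
    then have "gg p2 q r x \<le> gg p1 q r x"
      using FF_le_iff[OF r, of "gg p2 q r x" "gg p1 q r x" q] g1 g2 x by simp
    then have "(gg p2 q r x)\<^sup>2 - x\<^sup>2 \<le> (gg p1 q r x)\<^sup>2 - x\<^sup>2"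
      using g2 x by (simp add: power_mono)
    then show "Theta_integrand p1 q r x \<le> Theta_integrand p2 q r x"
      unfolding integrand_eq[OF r pq1 x'] integrand_eq[OF r p(2) x']
      using integrand_dom(3)[OF r p(2) x] by (intro inv_sqrt_mono)
  qed
qed

lemma mono_q: assumes r: "1 < (r::real)" and q: "p < q1" "q1 \<le> q2"
  shows "Theta p q2 r \<le> Theta p q1 r"
proof -
  have pq2: "p < q2" using q by simp
  show ?thesis unfolding Theta_eq[OF r]
  proof (rule set_integral_mono[OF Theta_integrable[OF r pq2] Theta_integrable[OF r q(1)]])
    fix x assume "x \<in> einterval (ereal 1) (ereal r)"
    then have x: "1 < x" "x < r" by auto
    then have x': "1 \<le> x" "x \<le> r" by auto
    have g1: "x \<le> gg p q1 r x" "gg p q1 r x \<le> r" "FF q1 r (gg p q1 r x) = FF p r x" using gg_props[OF r q(1) x'] by auto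
    have g2: "x \<le> gg p q2 r x" "FF q2 r (gg p q2 r x) = FF p r x" using gg_props[OF r pq2 x'] by auto
    have "FF q2 r (gg p q1 r x) \<le> FF q1 r (gg p q1 r x)" using FF_anti[OF r q(2), of "gg p q1 r x"] g1 x by simp
    then have "gg p q1 r x \<le> gg p q2 r x"
      using FF_le_iff[OF r, of "gg p q1 r x" "gg p q2 r x" q2] g1 g2 x by simp
    then have "(gg p q1 r x)\<^sup>2 - x\<^sup>2 \<le> (gg p q2 r x)\<^sup>2 - x\<^sup>2"
      using g1 x by (simp add: power_mono)
    then show "Theta_integrand p q2 r x \<le> Theta_integrand p q1 r x"
      unfolding integrand_eq[OF r pq2 x'] integrand_eq[OF r q(1) x']
      using integrand_dom(3)[OF r q(1) x] by (intro inv_sqrt_mono)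
  qed
qed

theorem theorem5p1:
  shows "(\<forall>p1 p2 q r. p1 \<le> p2 \<and> p2 < q \<and> 1 < r \<longrightarrow> Theta p1 q r \<le> Theta p2 q r)
       \<and> (\<forall>p q1 q2 r. p < q1 \<and> q1 \<le> q2 \<and> 1 < r \<longrightarrow> Theta p q2 r \<le> Theta p q1 r)"
  using mono_p mono_q by blast

end
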